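(* Let $\sigma:[0,\infty)\to[0,\infty)$ be nondecreasing with $\lim_{t\to\infty}\sigma(t)=\infty$, admitting $\varrho$ as a proximate order with $\lim_{t\to\infty}\varrho(t)=\rho$. Then $\beta(\sigma)=\mu(\sigma)=\rho(\sigma)=\alpha(\sigma)=\rho$. Consequently, if $\sigma$ admits a nonzero proximate order, then $\sigma$ satisfies $(\omega_1)$ and $(\omega_6)$.
   Context: A proximate order is a function $\varrho:(c,\infty)\to[0,\infty)$, $c\ge0$, which is continuous and piecewise continuously differentiable, with $\lim_{t\to\infty}\varrho(t)=\rho<\infty$ and $\lim_{t\to\infty}t\varrho'(t)\log t=0$; it is nonzero if $\rho>0$. $\sigma$ admits $\varrho$ as a proximate order if there are $A,B>0$ with $A\le\sigma(t)/t^{\varrho(t)}\le B$ for all $t$ large enough. For a positive measurable $f$ on $[A,\infty)$: $\alpha(f):=\inf\{\alpha:\exists C_\alpha>0\ \forall\Lambda>1,\ \limsup_{x\to\infty}\sup_{\lambda\in[1,\Lambda]}\frac{f(\lambda x)}{\lambda^{\alpha}f(x)}\le C_\alpha\}$, $\beta(f):=\sup\{\beta:\exists D_\beta>0\ \forall\Lambda>1,\ \liminf_{x\to\infty}\inf_{\lambda\in[1,\Lambda]}\frac{f(\lambda x)}{\lambda^{\beta}f(x)}\ge D_\beta\}$, $\mu(f):=\liminf_{x\to\infty}\frac{\log f(x)}{\log x}$, $\rho(f):=\limsup_{x\to\infty}\frac{\log f(x)}{\log x}$; for $\sigma$ these are computed on any $[A,\infty)$, $A>0$, where $\sigma>0$.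 Condition $(\omega_1)$: $\sigma(2t)=O(\sigma(t))$ as $t\to\infty$. Condition $(\omega_6)$: there is $H\ge1$ with $2\sigma(t)\le\sigma(Ht)+H$ for all $t\ge0$. *)

theory Defs
  imports "HOL-Analysis.Analysis" "HOL-Library.Landau_Symbols"
begin

definition proximate_order :: "(real \<Rightarrow> real) \<Rightarrow> real \<Rightarrow> bool" where
  "proximate_order \<rho> \<rho>0 \<longleftrightarrow>
     (\<exists>c\<ge>0.
        (\<forall>t>c. \<rho> t \<ge> 0) \<and>
        continuous_on {c<..} \<rho> \<and>
        (\<forall>a b. c < a \<longrightarrow> \<rho> piecewise_C1_differentiable_on {a..b}) \<and>
        (\<rho> \<longlongrightarrow> \<rho>0) at_top \<and>
        (\<forall>\<epsilon>>0. \<exists>T. \<forall>t>T. \<rho> differentiable (at t) \<longrightarrow>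
            \<bar>t * deriv \<rho> t * ln t\<bar> < \<epsilon>))"

definition admits_proximate_order :: "(real \<Rightarrow> real) \<Rightarrow> (real \<Rightarrow> real) \<Rightarrow> bool" where
  "admits_proximate_order \<sigma> \<rho> \<longleftrightarrow>
     (\<exists>A>0. \<exists>B>0. eventually (\<lambda>t. A \<le> \<sigma> t / t powr \<rho> t \<and> \<sigma> t / t powr \<rho> t \<le> B) at_top)"

definition index_alpha :: "(real \<Rightarrow> real) \<Rightarrow> ereal" where
  "index_alpha f = (INF a \<in> {a::real. \<exists>C>0. \<forall>\<Lambda>>1.
      Limsup at_top (\<lambda>x. SUP l\<in>{1..\<Lambda>}. ereal (f (l * x) / (l powr a * f x))) \<le> ereal C}. ereal a)"

definition index_beta :: "(real \<Rightarrow> real) \<Rightarrow> ereal" where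
  "index_beta f = (SUP b \<in> {b::real. \<exists>D>0. \<forall>\<Lambda>>1.
      Liminf at_top (\<lambda>x. INF l\<in>{1..\<Lambda>}. ereal (f (l * x) / (l powr b * f x))) \<ge> ereal D}. ereal b)"

definition index_mu :: "(real \<Rightarrow> real) \<Rightarrow> ereal" where
  "index_mu f = Liminf at_top (\<lambda>x. ereal (ln (f x) / ln x))"

definition index_rho :: "(real \<Rightarrow> real) \<Rightarrow> ereal" where
  "index_rho f = Limsup at_top (\<lambda>x. ereal (ln (f x) / ln x))"

definition omega1 :: "(real \<Rightarrow> real) \<Rightarrow> bool" where
  "omega1 \<sigma> \<longleftrightarrow> (\<lambda>t. \<sigma> (2 * t)) \<in> O(\<sigma>)"

definition omega6 :: "(real \<Rightarrow> real) \<Rightarrow> bool" where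
  "omega6 \<sigma> \<longleftrightarrow> (\<exists>H\<ge>1. \<forall>t\<ge>0. 2 * \<sigma> t \<le> \<sigma> (H * t) + H)"

end

theory Submission
  imports Defs
begin


lemma incr_finite_exc:
  fixes g g' :: "real \<Rightarrow> real"
  assumes "finite S" "a \<le> b" "continuous_on {a..b} g"
    "\<And>x. x \<in> {a<..<b} - S \<Longrightarrow> (g has_real_derivative g' x) (at x)"
    "\<And>x. x \<in> {a<..<b} - S \<Longrightarrow> g' x \<ge> 0"
  shows "g a \<le> g b"
proof -
  let ?h = "\<lambda>x. if x \<in> {a<..<b} - S then g' x else 0"
  have "(?h has_integral (g b - g a)) {a..b}"
    by (rule fundamental_theorem_of_calculus_interior_strong[OF assms(1,2) _ assms(3)])
       (use assms(4) in \<open>auto simp: has_real_derivative_iff_has_vector_derivative[symmetric]\<close>)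
  hence "0 \<le> g b - g a"
    by (rule has_integral_nonneg) (use assms(5) in auto)
  thus ?thesis by simp
qed

lemma po_diff:
  assumes po: "proximate_order \<rho> \<rho>0" and eps: "\<epsilon> > 0"
  shows "\<exists>X>1. \<forall>x y. X \<le> x \<longrightarrow> x \<le> y \<longrightarrow> \<bar>\<rho> y - \<rho> x\<bar> * ln x \<le> \<epsilon> * (ln y - ln x)"
proof -
  obtain c where c0: "c \<ge> 0" and cont: "continuous_on {c<..} \<rho>"
    and pw: "\<forall>a b. c < a \<longrightarrow> \<rho> piecewise_C1_differentiable_on {a..b}"
    and dv: "\<forall>\<epsilon>>0. \<exists>T. \<forall>t>T. \<rho> differentiable (at t) \<longrightarrow> \<bar>t * deriv \<rho> t * ln t\<bar> < \<epsilon>"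
    using po unfolding proximate_order_def by blast
  obtain T where T: "\<forall>t>T. \<rho> differentiable (at t) \<longrightarrow> \<bar>t * deriv \<rho> t * ln t\<bar> < \<epsilon>"
    using dv eps by blast
  define X where "X = max (c+1) (max (T+1) 2)"
  have "X > 1" unfolding X_def by simp
  moreover have "\<bar>\<rho> y - \<rho> x\<bar> * ln x \<le> \<epsilon> * (ln y - ln x)" if xy: "X \<le> x" "x \<le> y" for x y
  proof -
    have x1: "x > 1" "x > c" "x > T" using xy unfolding X_def by auto
    have lnx: "ln x > 0" using x1 by simp
    obtain K D where K: "finite K" and D: "\<forall>s\<in>{x..y} - K. (\<rho> has_vector_derivative D s) (at s)"
      using pw x1(2) unfolding piecewise_C1_differentiable_on_def C1_differentiable_on_def by blast
    have contxy: "continuous_on {x..y} \<rho>"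
      by (rule continuous_on_subset[OF cont]) (use x1 in auto)
    have contln: "continuous_on {x..y} ln"
      by (intro continuous_intros) (use x1 in auto)
    have key: "\<bar>D s\<bar> * ln x < \<epsilon> / s" and der: "(\<rho> has_real_derivative D s) (at s)"
      if s: "s \<in> {x<..<y} - K" for s
    proof -
      show der: "(\<rho> has_real_derivative D s) (at s)"
        using D s by (auto simp: has_real_derivative_iff_has_vector_derivative)
      have "\<rho> differentiable (at s)" using der real_differentiable_def by blast
      moreover have "deriv \<rho> s = D s" using der by (rule DERIV_imp_deriv)
      moreover have "s > T" using s x1 by auto
      ultimately have b: "\<bar>s * D s * ln s\<bar> < \<epsilon>" using T by auto
      have spos: "s > 0" "ln s \<ge> ln x" using s x1 by auto
      have lns: "\<bar>ln s\<bar> = ln s" by (rule abs_of_nonneg) (use spos lnx in linarith)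
      have "\<bar>D s\<bar> * ln x \<le> \<bar>D s\<bar> * ln s" using spos by (simp add: mult_left_mono)
      also have "\<dots> = \<bar>s * D s * ln s\<bar> / s" using spos by (simp only: abs_mult lns abs_of_pos[OF spos(1)]) (simp add: field_simps)
      also have "\<dots> < \<epsilon> / s" using b spos by (simp add: divide_strict_right_mono)
      finally show "\<bar>D s\<bar> * ln x < \<epsilon> / s" .
    qed
    have "(\<lambda>s. \<epsilon> * ln s - \<rho> s * ln x) x \<le> (\<lambda>s. \<epsilon> * ln s - \<rho> s * ln x) y"
    proof (rule incr_finite_exc[OF K xy(2), where g'="\<lambda>s. \<epsilon> / s - D s * ln x"])
      show "continuous_on {x..y} (\<lambda>s. \<epsilon> * ln s - \<rho> s * ln x)"
        by (intro continuous_intros contln contxy)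
      fix s assume s: "s \<in> {x<..<y} - K"
      hence sp: "s > 0" using x1 by auto
      show "((\<lambda>s. \<epsilon> * ln s - \<rho> s * ln x) has_real_derivative \<epsilon> / s - D s * ln x) (at s)"
        using der[OF s] sp by (auto intro!: derivative_eq_intros)
      have "D s * ln x \<le> \<bar>D s\<bar> * ln x"
        by (rule mult_right_mono) (use lnx in auto)
      thus "0 \<le> \<epsilon> / s - D s * ln x" using key[OF s] by linarith
    qed
    moreover have "(\<lambda>s. \<epsilon> * ln s + \<rho> s * ln x) x \<le> (\<lambda>s. \<epsilon> * ln s + \<rho> s * ln x) y"
    proof (rule incr_finite_exc[OF K xy(2), where g'="\<lambda>s. \<epsilon> / s + D s * ln x"])
      show "continuous_on {x..y} (\<lambda>s. \<epsilon> * ln s + \<rho> s * ln x)"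
        by (intro continuous_intros contln contxy)
      fix s assume s: "s \<in> {x<..<y} - K"
      hence sp: "s > 0" using x1 by auto
      show "((\<lambda>s. \<epsilon> * ln s + \<rho> s * ln x) has_real_derivative \<epsilon> / s + D s * ln x) (at s)"
        using der[OF s] sp by (auto intro!: derivative_eq_intros)
      have "(- D s) * ln x \<le> \<bar>D s\<bar> * ln x"
        by (rule mult_right_mono) (use lnx in auto)
      thus "0 \<le> \<epsilon> / s + D s * ln x" using key[OF s] by linarith
    qed
    ultimately have h1: "(\<rho> y - \<rho> x) * ln x \<le> \<epsilon> * (ln y - ln x)"
      and h2: "(\<rho> x - \<rho> y) * ln x \<le> \<epsilon> * (ln y - ln x)"
      by (simp_all add: algebra_simps)
    show ?thesis
    proof (cases "\<rho> y \<ge> \<rho> x")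
      case True thus ?thesis using h1 by (simp add: abs_of_nonneg)
    next
      case False thus ?thesis using h2 by (simp add: abs_of_neg)
    qed
  qed
  ultimately show ?thesis by blast
qed



lemma po_rv:
  assumes po: "proximate_order \<rho> \<rho>0" and L: "\<Lambda> \<ge> 1" and d: "\<delta> > 0"
  shows "eventually (\<lambda>x. \<forall>l\<in>{1..\<Lambda>}. \<bar>\<rho> (l*x) * ln (l*x) - \<rho> x * ln x - \<rho>0 * ln l\<bar> \<le> \<delta>) at_top"
proof -
  define \<epsilon> where "\<epsilon> = \<delta> / (2*(ln \<Lambda> + 1))"
  have lnL: "ln \<Lambda> \<ge> 0" using L by simp
  have ep: "\<epsilon> > 0" using d lnL unfolding \<epsilon>_def by simp
  have epL: "\<epsilon> * ln \<Lambda> \<le> \<delta>/2"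
  proof -
    have "\<epsilon> * (ln \<Lambda> + 1) = \<delta>/2" unfolding \<epsilon>_def using lnL by (simp add: field_simps)
    thus ?thesis using ep by (simp add: algebra_simps)
  qed
  obtain X where X: "X > 1" "\<forall>x y. X \<le> x \<longrightarrow> x \<le> y \<longrightarrow> \<bar>\<rho> y - \<rho> x\<bar> * ln x \<le> \<epsilon> * (ln y - ln x)"
    using po_diff[OF po ep] by blast
  have "(\<rho> \<longlongrightarrow> \<rho>0) at_top" using po unfolding proximate_order_def by blast
  hence "eventually (\<lambda>t. dist (\<rho> t) \<rho>0 < \<epsilon>) at_top" using ep by (rule tendstoD)
  then obtain X2 where X2: "\<forall>t\<ge>X2. \<bar>\<rho> t - \<rho>0\<bar> < \<epsilon>"
    unfolding eventually_at_top_linorder dist_real_def by blast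
  show ?thesis unfolding eventually_at_top_linorder
  proof (intro exI[of _ "max X X2"] allI impI ballI)
    fix x l assume x: "max X X2 \<le> x" and l: "l \<in> {1..\<Lambda>}"
    have x1: "x > 1" "x \<ge> X" "x \<ge> X2" using x X by auto
    have l1: "l \<ge> 1" "l \<le> \<Lambda>" using l by auto
    have lx: "l * x \<ge> x" using x1 l1 by simp
    have lnlx: "ln (l*x) = ln l + ln x" using x1 l1 by (simp add: ln_mult)
    have e: "\<rho> (l*x) * ln (l*x) - \<rho> x * ln x - \<rho>0 * ln l
        = (\<rho> (l*x) - \<rho>0) * ln l + (\<rho> (l*x) - \<rho> x) * ln x"
      unfolding lnlx by (simp add: algebra_simps)
    have lnl: "0 \<le> ln l" "ln l \<le> ln \<Lambda>" using l1 by auto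
    have r: "\<bar>\<rho> (l*x) - \<rho>0\<bar> \<le> \<epsilon>" using X2 lx x1(3) by (simp add: less_imp_le)
    have r2: "\<bar>\<rho> (l*x) - \<rho>0\<bar> * ln l \<le> \<epsilon> * ln l" using r lnl(1) by (rule mult_right_mono)
    have r3: "\<epsilon> * ln l \<le> \<epsilon> * ln \<Lambda>" using ep lnl by (intro mult_left_mono) auto
    have t1: "\<bar>(\<rho> (l*x) - \<rho>0) * ln l\<bar> \<le> \<epsilon> * ln \<Lambda>"
      using r2 r3 lnl by (simp add: abs_mult)
    have t2: "\<bar>(\<rho> (l*x) - \<rho> x) * ln x\<bar> \<le> \<epsilon> * ln \<Lambda>"
    proof -
      have "\<bar>(\<rho> (l*x) - \<rho> x) * ln x\<bar> = \<bar>\<rho> (l*x) - \<rho> x\<bar> * ln x" using x1 by (simp add: abs_mult)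
      also have "\<dots> \<le> \<epsilon> * (ln (l*x) - ln x)" using X(2) x1 lx by blast
      also have "\<dots> \<le> \<epsilon> * ln \<Lambda>" using ep lnl unfolding lnlx by (intro mult_left_mono) auto
      finally show ?thesis .
    qed
    show "\<bar>\<rho> (l*x) * ln (l*x) - \<rho> x * ln x - \<rho>0 * ln l\<bar> \<le> \<delta>"
      unfolding e using t1 t2 epL by linarith
  qed
qed

lemma ratio:
  assumes po: "proximate_order \<rho> \<rho>0" and A: "A > 0" "B > 0"
    and ev: "eventually (\<lambda>t. A \<le> \<sigma> t / t powr \<rho> t \<and> \<sigma> t / t powr \<rho> t \<le> B) at_top"
    and L: "\<Lambda> \<ge> 1"
  shows "eventually (\<lambda>x. \<sigma> x > 0 \<and> (\<forall>l\<in>{1..\<Lambda>}. A/(B*exp 1) * l powr \<rho>0 * \<sigma> x \<le> \<sigma> (l*x)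
            \<and> \<sigma> (l*x) \<le> B*exp 1/A * l powr \<rho>0 * \<sigma> x)) at_top"
proof -
  obtain X0 where X0: "\<forall>t\<ge>X0. A \<le> \<sigma> t / t powr \<rho> t \<and> \<sigma> t / t powr \<rho> t \<le> B"
    using ev unfolding eventually_at_top_linorder by blast
  obtain X1 where X1: "\<forall>x\<ge>X1. \<forall>l\<in>{1..\<Lambda>}. \<bar>\<rho> (l*x) * ln (l*x) - \<rho> x * ln x - \<rho>0 * ln l\<bar> \<le> 1"
    using po_rv[OF po L, of 1] unfolding eventually_at_top_linorder by auto
  define E where "E t = \<rho> t * ln t" for t
  have bnd: "A * exp (E t) \<le> \<sigma> t \<and> \<sigma> t \<le> B * exp (E t)" if "t \<ge> X0" "t > 0" for t
  proof -
    have p: "t powr \<rho> t = exp (E t)" using that by (simp add: powr_def E_def mult.commute)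
    have "A \<le> \<sigma> t / exp (E t) \<and> \<sigma> t / exp (E t) \<le> B" using X0 that(1) p by metis
    thus ?thesis by (simp add: field_simps)
  qed
  show ?thesis unfolding eventually_at_top_linorder
  proof (intro exI[of _ "max 1 (max X0 X1)"] allI impI)
    fix x assume x: "max 1 (max X0 X1) \<le> x"
    have x1: "x \<ge> 1" "x \<ge> X0" "x \<ge> X1" using x by auto
    have bx: "A * exp (E x) \<le> \<sigma> x" "\<sigma> x \<le> B * exp (E x)" using bnd x1 by auto
    have spos: "\<sigma> x > 0" using bx(1) A by (smt (verit) exp_gt_zero mult_pos_pos)
    moreover have "A/(B*exp 1) * l powr \<rho>0 * \<sigma> x \<le> \<sigma> (l*x) \<and> \<sigma> (l*x) \<le> B*exp 1/A * l powr \<rho>0 * \<sigma> x"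
      if l: "l \<in> {1..\<Lambda>}" for l
    proof -
      have l1: "l \<ge> 1" using l by auto
      have blx: "A * exp (E (l*x)) \<le> \<sigma> (l*x)" "\<sigma> (l*x) \<le> B * exp (E (l*x))"
      proof -
        have "x \<le> l * x" using mult_right_mono[of 1 l x] x1 l1 by simp
        hence "X0 \<le> l*x" "l*x > 0" using x1 by linarith+
        thus "A * exp (E (l*x)) \<le> \<sigma> (l*x)" "\<sigma> (l*x) \<le> B * exp (E (l*x))" using bnd by auto
      qed
      have d: "\<bar>E (l*x) - E x - \<rho>0 * ln l\<bar> \<le> 1" using X1 x1 l unfolding E_def by blast
      have lp: "l powr \<rho>0 = exp (\<rho>0 * ln l)" using l1 by (simp add: powr_def mult.commute)
      have up: "exp (E (l*x)) \<le> exp 1 * l powr \<rho>0 * exp (E x)"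
        unfolding lp mult_exp_exp using d by simp
      have lo: "l powr \<rho>0 * exp (E x) \<le> exp 1 * exp (E (l*x))"
        unfolding lp mult_exp_exp using d by simp
      have ex1: "exp (E x) \<le> \<sigma> x / A" using bx A by (simp add: field_simps)
      have ex2: "exp (E x) \<ge> \<sigma> x / B" using bx A by (simp add: field_simps)
      have "\<sigma> (l*x) \<le> B * (exp 1 * l powr \<rho>0 * exp (E x))"
        using blx(2) up A by (smt (verit) mult_left_mono)
      also have "\<dots> \<le> B * (exp 1 * l powr \<rho>0 * (\<sigma> x / A))"
        using ex1 A by (intro mult_left_mono) auto
      also have "\<dots> = B*exp 1/A * l powr \<rho>0 * \<sigma> x" by simp
      finally have U: "\<sigma> (l*x) \<le> B*exp 1/A * l powr \<rho>0 * \<sigma> x" .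
      have "A/(B*exp 1) * l powr \<rho>0 * \<sigma> x = A/exp 1 * (l powr \<rho>0 * (\<sigma> x / B))" using A by (simp add: field_simps)
      also have "\<dots> \<le> A/exp 1 * (l powr \<rho>0 * exp (E x))"
        using ex2 A by (intro mult_left_mono) auto
      also have "\<dots> \<le> A/exp 1 * (exp 1 * exp (E (l*x)))"
        using lo A by (intro mult_left_mono) auto
      also have "\<dots> = A * exp (E (l*x))" by simp
      also have "\<dots> \<le> \<sigma> (l*x)" by (rule blx(1))
      finally show ?thesis using U by simp
    qed
    ultimately show "\<sigma> x > 0 \<and> (\<forall>l\<in>{1..\<Lambda>}. A/(B*exp 1) * l powr \<rho>0 * \<sigma> x \<le> \<sigma> (l*x)
            \<and> \<sigma> (l*x) \<le> B*exp 1/A * l powr \<rho>0 * \<sigma> x)" by blast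
  qed
qed



lemma big_powr:
  fixes d M :: real assumes "d > 0"
  shows "\<exists>\<Lambda>>1. \<Lambda> powr d > M"
proof -
  define \<Lambda> where "\<Lambda> = max 2 ((\<bar>M\<bar>+1) powr (1/d))"
  have "(\<bar>M\<bar>+1) powr (1/d) \<le> \<Lambda>" unfolding \<Lambda>_def by simp
  hence "((\<bar>M\<bar>+1) powr (1/d)) powr d \<le> \<Lambda> powr d"
    using assms by (intro powr_mono2) auto
  moreover have "((\<bar>M\<bar>+1) powr (1/d)) powr d = \<bar>M\<bar>+1"
    using assms by (simp add: powr_powr)
  ultimately have "\<Lambda> powr d > M" by linarith
  moreover have "\<Lambda> > 1" unfolding \<Lambda>_def by simp
  ultimately show ?thesis by blast
qed

lemma alpha_beta:
  assumes po: "proximate_order \<rho> \<rho>0" and A: "A > 0" "B > 0"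
    and ev: "eventually (\<lambda>t. A \<le> \<sigma> t / t powr \<rho> t \<and> \<sigma> t / t powr \<rho> t \<le> B) at_top"
  shows "index_alpha \<sigma> = ereal \<rho>0" "index_beta \<sigma> = ereal \<rho>0"
proof -
  define K1 where "K1 = A/(B*exp 1)"
  define K2 where "K2 = B*exp 1/A"
  have K: "K1 > 0" "K2 > 0" using A unfolding K1_def K2_def by auto
  have R: "eventually (\<lambda>x. \<sigma> x > 0 \<and> (\<forall>l\<in>{1..\<Lambda>}. K1 * l powr (\<rho>0 - a) \<le> \<sigma> (l*x) / (l powr a * \<sigma> x)
            \<and> \<sigma> (l*x) / (l powr a * \<sigma> x) \<le> K2 * l powr (\<rho>0 - a))) at_top" if L: "\<Lambda> \<ge> 1" for \<Lambda> a
    using ratio[OF po A ev L]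
  proof eventually_elim
    case (elim x)
    hence sx: "\<sigma> x > 0" by blast
    show ?case
    proof (intro conjI ballI sx)
      fix l assume l: "l \<in> {1..\<Lambda>}"
      hence lp: "l powr a > 0" by auto
      have pd: "l powr (\<rho>0 - a) = l powr \<rho>0 / l powr a" by (simp add: powr_diff)
      have b: "K1 * l powr \<rho>0 * \<sigma> x \<le> \<sigma> (l*x)" "\<sigma> (l*x) \<le> K2 * l powr \<rho>0 * \<sigma> x"
        using elim l unfolding K1_def K2_def by auto
      show "K1 * l powr (\<rho>0 - a) \<le> \<sigma> (l*x) / (l powr a * \<sigma> x)"
        unfolding pd using b(1) lp sx by (simp add: field_simps)
      show "\<sigma> (l*x) / (l powr a * \<sigma> x) \<le> K2 * l powr (\<rho>0 - a)"
        unfolding pd using b(2) lp sx by (simp add: field_simps)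
    qed
  qed
  have ntriv: "\<not> trivial_limit (at_top :: real filter)" by simp
  define Sa where "Sa = {a::real. \<exists>C>0. \<forall>\<Lambda>>1.
      Limsup at_top (\<lambda>x. SUP l\<in>{1..\<Lambda>}. ereal (\<sigma> (l * x) / (l powr a * \<sigma> x))) \<le> ereal C}"
  have inA: "\<rho>0 \<in> Sa" unfolding Sa_def
  proof (intro CollectI exI[of _ K2] conjI allI impI K)
    fix \<Lambda> :: real assume "\<Lambda> > 1"
    show "Limsup at_top (\<lambda>x. SUP l\<in>{1..\<Lambda>}. ereal (\<sigma> (l * x) / (l powr \<rho>0 * \<sigma> x))) \<le> ereal K2"
      apply (rule Limsup_bounded)
      using R[of \<Lambda> \<rho>0, OF less_imp_le[OF \<open>\<Lambda> > 1\<close>]] by eventually_elim (auto intro!: SUP_least)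
  qed
  have geA: "ereal \<rho>0 \<le> ereal a" if a: "a \<in> Sa" for a
  proof (rule ccontr)
    assume "\<not> ?thesis"
    hence lt: "a < \<rho>0" by simp
    obtain C where C: "C > 0" "\<forall>\<Lambda>>1.
      Limsup at_top (\<lambda>x. SUP l\<in>{1..\<Lambda>}. ereal (\<sigma> (l * x) / (l powr a * \<sigma> x))) \<le> ereal C"
      using a unfolding Sa_def by blast
    obtain \<Lambda> where L: "\<Lambda> > 1" "\<Lambda> powr (\<rho>0 - a) > C / K1" using big_powr[of "\<rho>0 - a" "C/K1"] lt by auto
    have "ereal (K1 * \<Lambda> powr (\<rho>0 - a)) \<le> Liminf at_top (\<lambda>x. SUP l\<in>{1..\<Lambda>}. ereal (\<sigma> (l * x) / (l powr a * \<sigma> x)))"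
      apply (rule Liminf_bounded)
      using R[of \<Lambda> a, OF less_imp_le[OF L(1)]]
    proof eventually_elim
      case (elim x)
      have "\<Lambda> \<in> {1..\<Lambda>}" using L by auto
      hence "ereal (K1 * \<Lambda> powr (\<rho>0 - a)) \<le> ereal (\<sigma> (\<Lambda> * x) / (\<Lambda> powr a * \<sigma> x))" using elim by simp
      also have "\<dots> \<le> (SUP l\<in>{1..\<Lambda>}. ereal (\<sigma> (l * x) / (l powr a * \<sigma> x)))"
        by (rule SUP_upper) (use L in auto)
      finally show ?case .
    qed
    also have "\<dots> \<le> Limsup at_top (\<lambda>x. SUP l\<in>{1..\<Lambda>}. ereal (\<sigma> (l * x) / (l powr a * \<sigma> x)))"
      by (rule Liminf_le_Limsup[OF ntriv])
    also have "\<dots> \<le> ereal C" using C L by blast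
    finally have "K1 * \<Lambda> powr (\<rho>0 - a) \<le> C" by simp
    moreover have "K1 * \<Lambda> powr (\<rho>0 - a) > C" using L(2) K by (simp add: field_simps)
    ultimately show False by simp
  qed
  show "index_alpha \<sigma> = ereal \<rho>0"
    unfolding index_alpha_def Sa_def[symmetric]
    by (rule antisym) (auto intro!: INF_lower INF_greatest inA geA)
  define Sb where "Sb = {b::real. \<exists>D>0. \<forall>\<Lambda>>1.
      Liminf at_top (\<lambda>x. INF l\<in>{1..\<Lambda>}. ereal (\<sigma> (l * x) / (l powr b * \<sigma> x))) \<ge> ereal D}"
  have inB: "\<rho>0 \<in> Sb" unfolding Sb_def
  proof (intro CollectI exI[of _ K1] conjI allI impI K)
    fix \<Lambda> :: real assume "\<Lambda> > 1"
    show "Liminf at_top (\<lambda>x. INF l\<in>{1..\<Lambda>}. ereal (\<sigma> (l * x) / (l powr \<rho>0 * \<sigma> x))) \<ge> ereal K1"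
      apply (rule Liminf_bounded)
      using R[of \<Lambda> \<rho>0, OF less_imp_le[OF \<open>\<Lambda> > 1\<close>]] by eventually_elim (auto intro!: INF_greatest)
  qed
  have leB: "ereal b \<le> ereal \<rho>0" if b: "b \<in> Sb" for b
  proof (rule ccontr)
    assume "\<not> ?thesis"
    hence lt: "\<rho>0 < b" by simp
    obtain D where D: "D > 0" "\<forall>\<Lambda>>1.
      Liminf at_top (\<lambda>x. INF l\<in>{1..\<Lambda>}. ereal (\<sigma> (l * x) / (l powr b * \<sigma> x))) \<ge> ereal D"
      using b unfolding Sb_def by blast
    obtain \<Lambda> where L: "\<Lambda> > 1" "\<Lambda> powr (b - \<rho>0) > K2 / D" using big_powr[of "b - \<rho>0" "K2/D"] lt by auto
    have "ereal D \<le> Liminf at_top (\<lambda>x. INF l\<in>{1..\<Lambda>}. ereal (\<sigma> (l * x) / (l powr b * \<sigma> x)))"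
      using D L by blast
    also have "\<dots> \<le> Limsup at_top (\<lambda>x. INF l\<in>{1..\<Lambda>}. ereal (\<sigma> (l * x) / (l powr b * \<sigma> x)))"
      by (rule Liminf_le_Limsup[OF ntriv])
    also have "\<dots> \<le> ereal (K2 * \<Lambda> powr (\<rho>0 - b))"
      apply (rule Limsup_bounded)
      using R[of \<Lambda> b, OF less_imp_le[OF L(1)]]
    proof eventually_elim
      case (elim x)
      have i1: "(INF l\<in>{1..\<Lambda>}. ereal (\<sigma> (l * x) / (l powr b * \<sigma> x))) \<le> ereal (\<sigma> (\<Lambda> * x) / (\<Lambda> powr b * \<sigma> x))"
        by (rule INF_lower) (use L in auto)
      have "\<Lambda> \<in> {1..\<Lambda>}" using L by auto
      hence "ereal (\<sigma> (\<Lambda> * x) / (\<Lambda> powr b * \<sigma> x)) \<le> ereal (K2 * \<Lambda> powr (\<rho>0 - b))" using elim by simp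
      with i1 show ?case by (rule order.trans)
    qed
    finally have "D \<le> K2 * \<Lambda> powr (\<rho>0 - b)" by simp
    moreover have "K2 * \<Lambda> powr (\<rho>0 - b) = K2 / \<Lambda> powr (b - \<rho>0)"
      by (simp add: powr_diff)
    moreover have "K2 / \<Lambda> powr (b - \<rho>0) < D" using L D K by (simp add: field_simps)
    ultimately show False by simp
  qed
  show "index_beta \<sigma> = ereal \<rho>0"
    unfolding index_beta_def Sb_def[symmetric]
    by (rule antisym) (auto intro!: SUP_upper SUP_least inB leB)
qed



lemma mu_rho:
  assumes po: "proximate_order \<rho> \<rho>0" and A: "A > 0" "B > 0"
    and ev: "eventually (\<lambda>t. A \<le> \<sigma> t / t powr \<rho> t \<and> \<sigma> t / t powr \<rho> t \<le> B) at_top"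
  shows "index_mu \<sigma> = ereal \<rho>0" "index_rho \<sigma> = ereal \<rho>0"
proof -
  define g where "g x = ln (\<sigma> x / x powr \<rho> x)" for x
  define M where "M = \<bar>ln A\<bar> + \<bar>ln B\<bar>"
  have lim\<rho>: "(\<rho> \<longlongrightarrow> \<rho>0) at_top" using po unfolding proximate_order_def by blast
  have lnI: "filterlim (ln :: real \<Rightarrow> real) at_infinity at_top"
    by (rule filterlim_at_top_imp_at_infinity[OF ln_at_top])
  have e1: "eventually (\<lambda>x. ln (\<sigma> x) / ln x = g x / ln x + \<rho> x \<and> - M / ln x \<le> g x / ln x \<and> g x / ln x \<le> M / ln x) at_top"
    using ev eventually_gt_at_top[of 1]
  proof eventually_elim
    case (elim x)
    have xp: "x powr \<rho> x > 0" using elim by simp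
    have q: "\<sigma> x / x powr \<rho> x > 0" using elim A by linarith
    hence sp: "\<sigma> x > 0" using xp by (simp add: zero_less_divide_iff)
    have lnx: "ln x > 0" using elim by simp
    have gl: "ln A \<le> g x" "g x \<le> ln B" unfolding g_def using elim A q by auto
    have "ln (\<sigma> x) = g x + \<rho> x * ln x"
      unfolding g_def using sp xp elim by (simp add: ln_div ln_powr)
    hence eq: "ln (\<sigma> x) / ln x = g x / ln x + \<rho> x" using lnx by (simp add: field_simps)
    have "\<bar>g x\<bar> \<le> M" unfolding M_def using gl by linarith
    hence "- M / ln x \<le> g x / ln x \<and> g x / ln x \<le> M / ln x"
      using lnx by (simp add: divide_right_mono abs_le_iff field_simps)
    with eq show ?case by blast
  qed
  have t0: "((\<lambda>x. g x / ln x) \<longlongrightarrow> 0) at_top"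
  proof (rule tendsto_sandwich[of "\<lambda>x. - M / ln x" _ _ "\<lambda>x. M / ln x"])
    show "eventually (\<lambda>x. - M / ln x \<le> g x / ln x) at_top" using e1 by eventually_elim blast
    show "eventually (\<lambda>x. g x / ln x \<le> M / ln x) at_top" using e1 by eventually_elim blast
    show "((\<lambda>x. - M / ln x) \<longlongrightarrow> 0) at_top" by (rule tendsto_divide_0[OF tendsto_const lnI])
    show "((\<lambda>x. M / ln x) \<longlongrightarrow> 0) at_top" by (rule tendsto_divide_0[OF tendsto_const lnI])
  qed
  have L0: "((\<lambda>x. g x / ln x + \<rho> x) \<longlongrightarrow> \<rho>0) at_top" using tendsto_add[OF t0 lim\<rho>] by simp
  have ev2: "eventually (\<lambda>x. ln (\<sigma> x) / ln x = g x / ln x + \<rho> x) at_top"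
    using e1 by eventually_elim blast
  have "((\<lambda>x. ln (\<sigma> x) / ln x) \<longlongrightarrow> \<rho>0) at_top"
    using L0 by (subst tendsto_cong[OF ev2])
  hence T: "((\<lambda>x. ereal (ln (\<sigma> x) / ln x)) \<longlongrightarrow> ereal \<rho>0) at_top" by (rule tendsto_ereal)
  show "index_mu \<sigma> = ereal \<rho>0" unfolding index_mu_def by (rule lim_imp_Liminf[OF _ T]) simp
  show "index_rho \<sigma> = ereal \<rho>0" unfolding index_rho_def by (rule lim_imp_Limsup[OF _ T]) simp
qed

lemma omegas:
  assumes nonneg: "\<forall>t\<ge>0. \<sigma> t \<ge> 0" and mono: "mono_on {0..} \<sigma>"
    and po: "proximate_order \<rho> \<rho>0" and pos: "\<rho>0 > 0" and adm: "admits_proximate_order \<sigma> \<rho>"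
  shows "omega1 \<sigma> \<and> omega6 \<sigma>"
proof -
  obtain A B where A: "A > 0" "B > 0"
    and ev: "eventually (\<lambda>t. A \<le> \<sigma> t / t powr \<rho> t \<and> \<sigma> t / t powr \<rho> t \<le> B) at_top"
    using adm unfolding admits_proximate_order_def by blast
  define K1 where "K1 = A/(B*exp 1)"
  define K2 where "K2 = B*exp 1/A"
  have K: "K1 > 0" "K2 > 0" using A unfolding K1_def K2_def by auto
  have o1: "omega1 \<sigma>" unfolding omega1_def
  proof (rule bigoI[where c = "K2 * 2 powr \<rho>0"])
    show "eventually (\<lambda>x. norm (\<sigma> (2*x)) \<le> K2 * 2 powr \<rho>0 * norm (\<sigma> x)) at_top"
      using ratio[OF po A ev, of 2, OF one_le_numeral]
    proof eventually_elim
      case (elim x)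
      hence b: "K1 * 2 powr \<rho>0 * \<sigma> x \<le> \<sigma> (2*x)" "\<sigma> (2*x) \<le> K2 * 2 powr \<rho>0 * \<sigma> x" "\<sigma> x > 0"
        unfolding K1_def K2_def by auto
      have "0 \<le> K1 * 2 powr \<rho>0 * \<sigma> x" using K b(3) by simp
      hence "\<sigma> (2*x) \<ge> 0" using b(1) by linarith
      thus ?case using b by simp
    qed
  qed
  obtain H where H: "H > 1" "H powr \<rho>0 > 2 / K1" using big_powr[OF pos, of "2/K1"] by blast
  have KH: "K1 * H powr \<rho>0 \<ge> 2" using H(2) K by (simp add: field_simps)
  obtain X where X: "\<forall>x\<ge>X. \<sigma> x > 0 \<and> K1 * H powr \<rho>0 * \<sigma> x \<le> \<sigma> (H*x)"
    using ratio[OF po A ev, of H] H(1) unfolding eventually_at_top_linorder K1_def by fastforce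
  define X' where "X' = max X 0"
  define H' where "H' = max H (max 1 (2 * \<sigma> X'))"
  have o6: "2 * \<sigma> t \<le> \<sigma> (H' * t) + H'" if t: "t \<ge> 0" for t
  proof (cases "t \<ge> X'")
    case True
    hence "\<sigma> t > 0" "K1 * H powr \<rho>0 * \<sigma> t \<le> \<sigma> (H*t)" using X unfolding X'_def by auto
    moreover have "2 * \<sigma> t \<le> K1 * H powr \<rho>0 * \<sigma> t" using KH calculation(1) by (simp add: mult_right_mono)
    moreover have "\<sigma> (H*t) \<le> \<sigma> (H'*t)"
      by (rule mono_onD[OF mono]) (use t H in \<open>auto simp: H'_def intro!: mult_right_mono\<close>)
    moreover have "H' \<ge> 0" unfolding H'_def by simp
    ultimately show ?thesis by linarith
  next
    case False
    have "\<sigma> t \<le> \<sigma> X'" by (rule mono_onD[OF mono]) (use t False in \<open>auto simp: X'_def\<close>)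
    moreover have "\<sigma> (H'*t) \<ge> 0" using nonneg t H by (simp add: H'_def)
    moreover have "2 * \<sigma> X' \<le> H'" unfolding H'_def by simp
    ultimately show ?thesis by linarith
  qed
  have "H' \<ge> 1" unfolding H'_def by simp
  hence "omega6 \<sigma>" unfolding omega6_def using o6 by blast
  with o1 show ?thesis by blast
qed

theorem corollary4p16:
  fixes \<sigma> \<rho> :: "real \<Rightarrow> real" and \<rho>0 :: real
  assumes nonneg: "\<forall>t\<ge>0. \<sigma> t \<ge> 0"
    and mono: "mono_on {0..} \<sigma>"
    and lim: "filterlim \<sigma> at_top at_top"
    and po: "proximate_order \<rho> \<rho>0"
    and adm: "admits_proximate_order \<sigma> \<rho>"
  shows "index_beta \<sigma> = ereal \<rho>0 \<and> index_mu \<sigma> = ereal \<rho>0 \<and>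
         index_rho \<sigma> = ereal \<rho>0 \<and> index_alpha \<sigma> = ereal \<rho>0 \<and>
         ((\<exists>\<rho>' \<rho>0'. proximate_order \<rho>' \<rho>0' \<and> \<rho>0' > 0 \<and> admits_proximate_order \<sigma> \<rho>')
            \<longrightarrow> omega1 \<sigma> \<and> omega6 \<sigma>)"
proof -
  obtain A B where A: "A > 0" "B > 0"
    and ev: "eventually (\<lambda>t. A \<le> \<sigma> t / t powr \<rho> t \<and> \<sigma> t / t powr \<rho> t \<le> B) at_top"
    using adm unfolding admits_proximate_order_def by blast
  show ?thesis
    using alpha_beta[OF po A ev] mu_rho[OF po A ev] omegas[OF nonneg mono] by blast
qed

end
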